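(* Assume $\lambda_A>0$ (the dataset need not be balanced). Then for every $\theta\in\mathbb R^d$, $$w(\theta)\le 2f_d(\theta)+\frac{\gamma^2}{N}\Big((\phi(s_{N+1})^T(\theta-\theta^* ))^2-(\phi(s_1)^T(\theta-\theta^* ))^2\Big)\le\Big(2+\frac{\gamma^2}{N\lambda_A}\Big)f_d(\theta).$$
   Context: Finite-sample setting. Let $\mathcal S$ be a finite state space, $\phi:\mathcal S\to\mathbb R^d$ a feature map with $\|\phi(s)\|_2\le 1$ for all $s$, $r:\mathcal S\times\mathcal S\to\mathbb R$ a reward function and $\gamma\in[0,1)$. For a pair of states $(s,s')$ and $\theta\in\mathbb R^d$ let $g_{s,s'}(\theta)=(r(s,s')+\gamma\phi(s')^T\theta-\phi(s)^T\theta)\phi(s)$. A dataset is a state trajectory $s_1,\dots,s_{N+1}$, giving the $N$ pairs $(s_t,s_{t+1})$, $t=1,\dots,N$. Let $A_d=\frac1N\sum_{t=1}^N\phi(s_t)(\phi(s_t)-\gamma\phi(s_{t+1}))^T$ and $b_d=\frac1N\sum_{t=1}^N r(s_t,s_{t+1})\phi(s_t)$. Assume $A_d$ is nonsingular and let $\theta^*=A_d^{-1}b_d$. Let $\lambda_A$ denote the minimum eigenvalue of $(A_d+A_d^T)/2$. Define $f_d(\theta)=(\theta-\theta^* )^TA_d(\theta-\theta^* )$ and $w(\theta)=\frac1N\sum_{t=1}^N\|g_{s_t,s_{t+1}}(\theta)-g_{s_t,s_{t+1}}(\theta^* )\|^2$. *)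

theory Defs
  imports "HOL-Analysis.Analysis"
begin

definition outer :: "real ^ 'd \<Rightarrow> real ^ 'd \<Rightarrow> real ^ 'd ^ 'd" where
  "outer u v = (\<chi> i j. u $ i * v $ j)"

definition real_eigenvalues :: "real ^ 'd ^ 'd \<Rightarrow> real set" where
  "real_eigenvalues M = {l. \<exists>v. v \<noteq> 0 \<and> M *v v = l *\<^sub>R v}"

definition min_eigenvalue :: "real ^ 'd ^ 'd \<Rightarrow> real" where
  "min_eigenvalue M = Min (real_eigenvalues M)"

definition td_g :: "('s \<Rightarrow> real ^ 'd) \<Rightarrow> ('s \<Rightarrow> 's \<Rightarrow> real) \<Rightarrow> real \<Rightarrow> 's \<Rightarrow> 's \<Rightarrow> real ^ 'd \<Rightarrow> real ^ 'd" where
  "td_g \<phi> r \<gamma> s s' \<theta> = (r s s' + \<gamma> * (\<phi> s' \<bullet> \<theta>) - \<phi> s \<bullet> \<theta>) *\<^sub>R \<phi> s"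

definition A_d :: "('s \<Rightarrow> real ^ 'd) \<Rightarrow> real \<Rightarrow> nat \<Rightarrow> (nat \<Rightarrow> 's) \<Rightarrow> real ^ 'd ^ 'd" where
  "A_d \<phi> \<gamma> N s = (1 / real N) *\<^sub>R (\<Sum>t=1..N. outer (\<phi> (s t)) (\<phi> (s t) - \<gamma> *\<^sub>R \<phi> (s (Suc t))))"

definition b_d :: "('s \<Rightarrow> real ^ 'd) \<Rightarrow> ('s \<Rightarrow> 's \<Rightarrow> real) \<Rightarrow> nat \<Rightarrow> (nat \<Rightarrow> 's) \<Rightarrow> real ^ 'd" where
  "b_d \<phi> r N s = (1 / real N) *\<^sub>R (\<Sum>t=1..N. r (s t) (s (Suc t)) *\<^sub>R \<phi> (s t))"

definition theta_star where
  "theta_star \<phi> r \<gamma> N s = matrix_inv (A_d \<phi> \<gamma> N s) *v b_d \<phi> r N s"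

definition lambda_A where
  "lambda_A \<phi> \<gamma> N s = min_eigenvalue ((1/2) *\<^sub>R (A_d \<phi> \<gamma> N s + transpose (A_d \<phi> \<gamma> N s)))"

definition f_d where
  "f_d \<phi> r \<gamma> N s \<theta> = (\<theta> - theta_star \<phi> r \<gamma> N s) \<bullet> (A_d \<phi> \<gamma> N s *v (\<theta> - theta_star \<phi> r \<gamma> N s))"

definition w_fun where
  "w_fun \<phi> r \<gamma> N s \<theta> = (1 / real N) * (\<Sum>t=1..N.
     (norm (td_g \<phi> r \<gamma> (s t) (s (Suc t)) \<theta> - td_g \<phi> r \<gamma> (s t) (s (Suc t)) (theta_star \<phi> r \<gamma> N s)))\<^sup>2)"

end

theory Submission
  imports Defs
begin

lemma sum_mvm: "finite I \<Longrightarrow> (sum f I) *v (x::real^'d) = (\<Sum>i\<in>I. f i *v x)"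
  by (induction I rule: finite_induct) (auto simp: matrix_vector_mult_add_rdistrib)

lemma scaleR_mvm: "(c *\<^sub>R M) *v (x::real^'d) = c *\<^sub>R (M *v x)"
  by (simp add: vec_eq_iff matrix_vector_mult_def sum_distrib_left algebra_simps)

lemma outer_mvm: "outer u v *v x = (v \<bullet> x) *\<^sub>R (u::real^'d)"
  by (simp add: vec_eq_iff matrix_vector_mult_def outer_def inner_vec_def sum_distrib_left algebra_simps)

lemma sym_inner:
  fixes S :: "real^'d^'d"
  assumes "transpose S = S"
  shows "(S *v x) \<bullet> y = x \<bullet> (S *v y)"
proof -
  have "(x v* S) \<bullet> y = x \<bullet> (S *v y)" by (rule dot_lmul_matrix)
  moreover have "x v* S = S *v x" using transpose_matrix_vector[of S x] assms by simp
  ultimately show ?thesis by simp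
qed

lemma eig_finite:
  fixes S :: "real^'d^'d"
  assumes "transpose S = S"
  shows "finite (real_eigenvalues S)"
proof -
  define f where "f l = (SOME v. v \<noteq> 0 \<and> S *v v = l *\<^sub>R v)" for l
  have fP: "f l \<noteq> 0 \<and> S *v f l = l *\<^sub>R f l" if "l \<in> real_eigenvalues S" for l
  proof -
    have "\<exists>v. v \<noteq> 0 \<and> S *v v = l *\<^sub>R v" using that unfolding real_eigenvalues_def by simp
    then show ?thesis unfolding f_def by (rule someI_ex)
  qed
  have inj: "inj_on f (real_eigenvalues S)"
  proof (rule inj_onI)
    fix a b assume a: "a \<in> real_eigenvalues S" and b: "b \<in> real_eigenvalues S" and e: "f a = f b"
    have "a *\<^sub>R f a = S *v f a" using fP[OF a] by simp
    also have "\<dots> = S *v f b" using e by simp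
    also have "\<dots> = b *\<^sub>R f b" using fP[OF b] by simp
    also have "\<dots> = b *\<^sub>R f a" using e by simp
    finally have "(a - b) *\<^sub>R f a = 0" by (simp add: scaleR_diff_left)
    then show "a = b" using fP[OF a] by simp
  qed
  have orth: "pairwise orthogonal (f ` real_eigenvalues S)"
    unfolding pairwise_def
  proof (intro ballI impI)
    fix y z assume y: "y \<in> f ` real_eigenvalues S" and z: "z \<in> f ` real_eigenvalues S" and ne: "y \<noteq> z"
    obtain a where a: "a \<in> real_eigenvalues S" and ya: "y = f a" using y by blast
    obtain b where b: "b \<in> real_eigenvalues S" and zb: "z = f b" using z by blast
    have "a \<noteq> b" using ne ya zb by blast
    have "a * (f a \<bullet> f b) = (S *v f a) \<bullet> f b" using fP[OF a] by simp
    also have "\<dots> = f a \<bullet> (S *v f b)" by (rule sym_inner[OF assms])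
    also have "\<dots> = b * (f a \<bullet> f b)" using fP[OF b] by simp
    finally have "(a - b) * (f a \<bullet> f b) = 0" by (simp add: left_diff_distrib)
    then show "orthogonal y z" using \<open>a \<noteq> b\<close> ya zb by (simp add: orthogonal_def)
  qed
  have "0 \<notin> f ` real_eigenvalues S" using fP by auto
  then have "independent (f ` real_eigenvalues S)"
    by (rule pairwise_orthogonal_independent[OF orth])
  then have "finite (f ` real_eigenvalues S)" using independent_bound_general by auto
  then show ?thesis by (rule finite_imageD[OF _ inj])
qed

lemma min_eig_bound:
  fixes S :: "real^'d^'d"
  assumes sym: "transpose S = S"
  shows "x \<bullet> (S *v x) \<ge> min_eigenvalue S * (x \<bullet> x)"
proof -
  let ?q = "\<lambda>v. v \<bullet> (S *v v)"
  have "continuous_on (sphere 0 1) ?q"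
    by (intro continuous_intros)
  then obtain u where u: "u \<in> sphere (0::real^'d) 1" and umin: "\<And>y. y \<in> sphere 0 1 \<Longrightarrow> ?q u \<le> ?q y"
    using continuous_attains_inf[of "sphere (0::real^'d) 1" ?q] by auto
  define m where "m = ?q u"
  have uu: "u \<bullet> u = 1" using u by (simp add: dot_square_norm)
  have qge: "?q v \<ge> m * (v \<bullet> v)" for v
  proof (cases "v = 0")
    case True then show ?thesis by simp
  next
    case False
    let ?w = "v /\<^sub>R norm v"
    have "?w \<in> sphere 0 1" using False by simp
    then have "m \<le> ?q ?w" unfolding m_def by (rule umin)
    also have "?q ?w = ?q v / (norm v)^2"
      by (simp add: matrix_vector_mult_scaleR power2_eq_square divide_inverse)
    finally show ?thesis using False by (simp add: field_simps dot_square_norm)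
  qed
  define p where "p v = ?q v - m * (v \<bullet> v)" for v
  have p0: "p v \<ge> 0" for v using qge[of v] p_def by simp
  have pu: "p u = 0" using uu by (simp add: p_def m_def)
  have c0: "v \<bullet> (S *v u - m *\<^sub>R u) = 0" for v
  proof (rule ccontr)
    define c where "c = v \<bullet> (S *v u - m *\<^sub>R u)"
    assume "c \<noteq> 0"
    have exp: "p (u + t *\<^sub>R v) = p u + 2 * t * c + t^2 * p v" for t
    proof -
      have "v \<bullet> (S *v u) = u \<bullet> (S *v v)" using sym_inner[OF sym, of v u] by (simp add: inner_commute)
      then show ?thesis
        by (simp add: p_def c_def matrix_vector_right_distrib matrix_vector_mult_scaleR
            inner_add_left inner_add_right inner_diff_right power2_eq_square algebra_simps inner_commute[of v u])
    qed
    define t where "t = - c / (p v + 1)"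
    have pv: "p v + 1 > 0" using p0[of v] by simp
    have tq: "t * (p v + 1) = - c" using pv by (simp add: t_def)
    have e1: "t^2 * p v = t * (t * (p v + 1)) - t^2" by (simp add: algebra_simps power2_eq_square)
    have "(t * c) * (p v + 1) = - (c * c)" using tq by (metis minus_mult_right mult.assoc mult.commute)
    moreover have "c * c > 0" using \<open>c \<noteq> 0\<close> by (metis not_real_square_gt_zero)
    ultimately have tc: "t * c < 0"
    proof -
      assume h1: "t * c * (p v + 1) = - (c * c)" and h2: "0 < c * c"
      show ?thesis
      proof (rule ccontr)
        assume "\<not> t * c < 0"
        then have "t * c * (p v + 1) \<ge> 0" using pv by simp
        then show False using h1 h2 by linarith
      qed
    qed
    have "p (u + t *\<^sub>R v) = 2 * t * c + t^2 * p v" using exp pu by simp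
    also have "\<dots> = t * c - t^2"
    proof -
      have e2: "t^2 * p v = - (t * c) - t^2" using e1 tq by simp
      show ?thesis using e2 by (simp add: mult.assoc)
    qed
    also have "\<dots> < 0" using tc by (smt (verit) zero_le_power2)
    finally show False using p0 by (metis not_less)
  qed
  have "S *v u - m *\<^sub>R u = 0" using c0[of "S *v u - m *\<^sub>R u"] by simp
  moreover have "u \<noteq> 0" using u by auto
  ultimately have "m \<in> real_eigenvalues S" unfolding real_eigenvalues_def by auto
  then have "min_eigenvalue S \<le> m"
    unfolding min_eigenvalue_def using eig_finite[OF sym] by simp
  then have "min_eigenvalue S * (x \<bullet> x) \<le> m * (x \<bullet> x)"
    by (intro mult_right_mono) auto
  then show ?thesis using qge[of x] by simp
qed


lemma quad_sym:
  fixes A :: "real^'d^'d"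
  shows "x \<bullet> (((1/2) *\<^sub>R (A + transpose A)) *v x) = x \<bullet> (A *v x)"
proof -
  have "x \<bullet> (transpose A *v x) = x \<bullet> (A *v x)"
    using dot_lmul_matrix[of x A x] by (simp add: inner_commute)
  then show ?thesis
    by (simp add: scaleR_mvm matrix_vector_mult_add_rdistrib inner_add_right)
qed

lemma transpose_sym:
  fixes A :: "real^'d^'d"
  shows "transpose ((1/2) *\<^sub>R (A + transpose A)) = (1/2) *\<^sub>R (A + transpose A)"
  by (simp add: vec_eq_iff transpose_def)

theorem mainTheorem6:
  fixes \<phi> :: "'s \<Rightarrow> real ^ 'd" and r :: "'s \<Rightarrow> 's \<Rightarrow> real" and \<gamma> :: real
    and N :: nat and s :: "nat \<Rightarrow> 's" and \<theta> :: "real ^ 'd"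
  assumes "finite (UNIV :: 's set)"
    and phi1: "\<And>x. norm (\<phi> x) \<le> 1"
    and g0: "0 \<le> \<gamma>" and g1: "\<gamma> < 1"
    and N1: "N \<ge> 1"
    and "invertible (A_d \<phi> \<gamma> N s)"
    and lam: "lambda_A \<phi> \<gamma> N s > 0"
  shows "w_fun \<phi> r \<gamma> N s \<theta> \<le> 2 * f_d \<phi> r \<gamma> N s \<theta>
           + \<gamma>\<^sup>2 / real N * ((\<phi> (s (N+1)) \<bullet> (\<theta> - theta_star \<phi> r \<gamma> N s))\<^sup>2
                              - (\<phi> (s 1) \<bullet> (\<theta> - theta_star \<phi> r \<gamma> N s))\<^sup>2)
     \<and> 2 * f_d \<phi> r \<gamma> N s \<theta>
           + \<gamma>\<^sup>2 / real N * ((\<phi> (s (N+1)) \<bullet> (\<theta> - theta_star \<phi> r \<gamma> N s))\<^sup>2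
                              - (\<phi> (s 1) \<bullet> (\<theta> - theta_star \<phi> r \<gamma> N s))\<^sup>2)
       \<le> (2 + \<gamma>\<^sup>2 / (real N * lambda_A \<phi> \<gamma> N s)) * f_d \<phi> r \<gamma> N s \<theta>"
proof -
  define ts where "ts = theta_star \<phi> r \<gamma> N s"
  define x where "x = \<theta> - ts"
  define a where "a t = \<phi> (s t) \<bullet> x" for t
  define A where "A = A_d \<phi> \<gamma> N s"
  define l where "l = lambda_A \<phi> \<gamma> N s"
  define F where "F = f_d \<phi> r \<gamma> N s \<theta>"
  have Npos: "real N > 0" using N1 by simp
  have FA: "F = x \<bullet> (A *v x)" by (simp add: F_def f_d_def x_def ts_def A_def)
  have Ax: "A *v x = (1 / real N) *\<^sub>R (\<Sum>t=1..N. (a t - \<gamma> * a (Suc t)) *\<^sub>R \<phi> (s t))"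
    by (simp add: A_def A_d_def scaleR_mvm sum_mvm outer_mvm a_def inner_diff_left)
  have Fsum: "F = (1 / real N) * (\<Sum>t=1..N. a t * (a t - \<gamma> * a (Suc t)))"
    by (simp add: FA Ax inner_sum_right a_def inner_commute mult.commute)
  have wsum: "w_fun \<phi> r \<gamma> N s \<theta> = (1 / real N) * (\<Sum>t=1..N. (\<gamma> * a (Suc t) - a t)\<^sup>2 * (norm (\<phi> (s t)))\<^sup>2)"
  proof -
    have "td_g \<phi> r \<gamma> (s t) (s (Suc t)) \<theta> - td_g \<phi> r \<gamma> (s t) (s (Suc t)) ts
          = (\<gamma> * a (Suc t) - a t) *\<^sub>R \<phi> (s t)" for t
      by (simp add: td_g_def a_def x_def inner_diff_right algebra_simps)
    then show ?thesis
      by (simp add: w_fun_def ts_def[symmetric] power_mult_distrib)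
  qed
  have tm: "(\<gamma> * a (Suc t) - a t)\<^sup>2 * (norm (\<phi> (s t)))\<^sup>2
      \<le> 2 * (a t * (a t - \<gamma> * a (Suc t))) + \<gamma>\<^sup>2 * ((a (Suc t))\<^sup>2 - (a t)\<^sup>2)" for t
  proof -
    have "(norm (\<phi> (s t)))\<^sup>2 \<le> 1" using phi1[of "s t"] by (simp add: power_le_one)
    then have "(\<gamma> * a (Suc t) - a t)\<^sup>2 * (norm (\<phi> (s t)))\<^sup>2 \<le> (\<gamma> * a (Suc t) - a t)\<^sup>2"
      by (simp add: mult_left_le)
    moreover have "(\<gamma> * a (Suc t) - a t)\<^sup>2 + (1 - \<gamma>\<^sup>2) * (a t)\<^sup>2
        = 2 * (a t * (a t - \<gamma> * a (Suc t))) + \<gamma>\<^sup>2 * ((a (Suc t))\<^sup>2 - (a t)\<^sup>2)"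
      by (simp add: power2_eq_square algebra_simps)
    moreover have "(1 - \<gamma>\<^sup>2) * (a t)\<^sup>2 \<ge> 0"
      using g0 g1 by (simp add: power_le_one)
    ultimately show ?thesis by linarith
  qed
  have tele: "(\<Sum>t=1..N. (a (Suc t))\<^sup>2 - (a t)\<^sup>2) = (a (N+1))\<^sup>2 - (a 1)\<^sup>2"
    using sum_Suc_diff[of 1 N "\<lambda>t. (a t)\<^sup>2"] N1 by simp
  have "(\<Sum>t=1..N. (\<gamma> * a (Suc t) - a t)\<^sup>2 * (norm (\<phi> (s t)))\<^sup>2)
      \<le> (\<Sum>t=1..N. 2 * (a t * (a t - \<gamma> * a (Suc t))) + \<gamma>\<^sup>2 * ((a (Suc t))\<^sup>2 - (a t)\<^sup>2))"
    by (rule sum_mono) (rule tm)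
  also have "\<dots> = 2 * (\<Sum>t=1..N. a t * (a t - \<gamma> * a (Suc t))) + \<gamma>\<^sup>2 * ((a (N+1))\<^sup>2 - (a 1)\<^sup>2)"
    using tele by (simp add: sum.distrib sum_distrib_left[symmetric])
  finally have first: "w_fun \<phi> r \<gamma> N s \<theta> \<le> 2 * F + \<gamma>\<^sup>2 / real N * ((a (N+1))\<^sup>2 - (a 1)\<^sup>2)"
    unfolding wsum Fsum using Npos
    by (simp add: divide_simps)
  have Fge: "F \<ge> l * (x \<bullet> x)"
    using min_eig_bound[OF transpose_sym[of A], of x] quad_sym[of x A]
    by (simp add: FA l_def lambda_A_def A_def)
  have aN: "(a (N+1))\<^sup>2 \<le> x \<bullet> x"
  proof -
    have "\<bar>a (N+1)\<bar> \<le> norm (\<phi> (s (N+1))) * norm x" unfolding a_def by (rule Cauchy_Schwarz_ineq2)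
    also have "\<dots> \<le> norm x" using phi1[of "s (N+1)"] by (simp add: mult_left_le_one_le)
    finally have "\<bar>a (N+1)\<bar> \<le> norm x" .
    then have "\<bar>a (N+1)\<bar>\<^sup>2 \<le> (norm x)\<^sup>2" by (intro power_mono) auto
    then show ?thesis by (simp add: dot_square_norm)
  qed
  have "l * (a (N+1))\<^sup>2 \<le> F" using Fge aN lam l_def
    by (meson mult_left_mono less_imp_le order_trans)
  then have "(a (N+1))\<^sup>2 \<le> F / l" using lam l_def by (simp add: field_simps)
  then have "(a (N+1))\<^sup>2 - (a 1)\<^sup>2 \<le> F / l" using zero_le_power2[of "a 1"] by linarith
  then have "\<gamma>\<^sup>2 / real N * ((a (N+1))\<^sup>2 - (a 1)\<^sup>2) \<le> \<gamma>\<^sup>2 / real N * (F / l)"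
    using Npos by (intro mult_left_mono) auto
  also have "\<dots> = \<gamma>\<^sup>2 / (real N * l) * F" by simp
  finally have second: "2 * F + \<gamma>\<^sup>2 / real N * ((a (N+1))\<^sup>2 - (a 1)\<^sup>2) \<le> (2 + \<gamma>\<^sup>2 / (real N * l)) * F"
    by (simp add: algebra_simps)
  show ?thesis using first second
    by (simp add: a_def x_def ts_def F_def l_def)
qed

end
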